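(* Let $\Gamma\subseteq\mathbb{B}_n$ be an embedded submanifold, $a\in C_0^\infty(\Gamma)$ positive, $p\in(0,1)$, $\epsilon>0$, and $\mathcal V=\{z\in\mathbb{B}_n:\ \exists w\in\Gamma,\ \beta(z,w)<\epsilon\}$. Then, as $\alpha\to\infty$, $$c_\alpha^{1+p}\int_{\mathbb{B}_n\setminus\mathcal V}\left[\int_\Gamma\Big(\frac{(1-|z|^2)(1-|w|^2)}{|1-\langle z,w\rangle|^2}\Big)^{n+1+\alpha}\frac{a(w)\,d\sigma(w)}{(1-|w|^2)^{n+1}}\right]^p d\tau(z)=O(\alpha^{-N})\quad\text{for every }N>0.$$
   Context: $\mathbb{B}_n=\{z\in\mathbb{C}^n:|z|<1\}$, $\langle z,w\rangle=\sum_jz_j\overline{w_j}$, $dv$ normalized Lebesgue measure, $d\tau(z)=\frac{dv(z)}{(1-|z|^2)^{n+1}}$ the invariant measure, $c_\alpha=\frac{\Gamma(\alpha+n+1)}{n!\,\Gamma(\alpha+1)}$. The hyperbolic (Bergman) distance is $\beta(z,w)=\tanh^{-1}|\varphi_z(w)|$, where $\varphi_z$ is the involutive automorphism of $\mathbb{B}_n$ exchanging $z$ and $0$, so that $1-|\varphi_z(w)|^2=\frac{(1-|z|^2)(1-|w|^2)}{|1-\langle z,w\rangle|^2}$. $\Gamma$ carries the Riemannian metric induced from the Bergman metric of $\mathbb{B}_n$ (Hermitian metric $b_{jk}(p)=\frac{1}{n+1}\partial_{z_j}\partial_{\bar z_k}\log(1-|z|^2)^{-(n+1)}|_{z=p}$),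 and $\sigma$ is its Riemannian volume measure. *)

theory Defs
  imports "HOL-Analysis.Analysis"
begin

text \<open>C^0 = continuous; C^(k+1) = differentiable with every directional derivative
  x |-> Df(x) v of class C^k.  (On open sets of finite-dimensional spaces this is the
  usual C^(k+1).)\<close>
fun Ck_on :: "nat \<Rightarrow> ('a::euclidean_space \<Rightarrow> 'b::real_normed_vector) \<Rightarrow> 'a set \<Rightarrow> bool" where
  "Ck_on 0 f S = continuous_on S f"
| "Ck_on (Suc k) f S =
     (f differentiable_on S \<and> (\<forall>v. Ck_on k (\<lambda>x. frechet_derivative f (at x) v) S))"

definition smooth_on :: "('a::euclidean_space \<Rightarrow> 'b::real_normed_vector) \<Rightarrow> 'a set \<Rightarrow> bool" where
  "smooth_on f S \<longleftrightarrow> (\<forall>k. Ck_on k f S)"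

text \<open>C^n is modelled as \<open>complex^'n\<close>, n = CARD('n).\<close>

definition cinner :: "complex^'n \<Rightarrow> complex^'n \<Rightarrow> complex" where
  "cinner z w = (\<Sum>j\<in>UNIV. z $ j * cnj (w $ j))"

definition unit_ball :: "(complex^'n) set" where
  "unit_ball = ball 0 1"

text \<open>Involutive automorphism phi_z exchanging z and 0 (Rudin):
  phi_z(w) = (z - P_z w - s_z Q_z w) / (1 - <w,z>), s_z = sqrt(1-|z|^2),
  P_z w = (<w,z>/<z,z>) z, Q_z = I - P_z  (P_0 = 0).\<close>
definition proj_z :: "complex^'n \<Rightarrow> complex^'n \<Rightarrow> complex^'n" where
  "proj_z z w = (if z = 0 then 0 else (\<chi> j. (cinner w z / cinner z z) * z $ j))"

definition phi_aut :: "complex^'n \<Rightarrow> complex^'n \<Rightarrow> complex^'n" where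
  "phi_aut z w =
     (\<chi> j. (z $ j - proj_z z w $ j
              - complex_of_real (sqrt (1 - (norm z)\<^sup>2)) * (w $ j - proj_z z w $ j))
            / (1 - cinner w z))"

definition hyp_dist :: "complex^'n \<Rightarrow> complex^'n \<Rightarrow> real" where
  "hyp_dist z w = artanh (norm (phi_aut z w))"

definition ball_vol :: "(complex^'n) measure" where
  "ball_vol = density lborel
     (\<lambda>z. ennreal (indicator unit_ball z / measure lborel (unit_ball :: (complex^'n) set)))"

definition tau_measure :: "(complex^'n) measure" where
  "tau_measure = density lborel
     (\<lambda>z. ennreal (indicator unit_ball z /
        (measure lborel (unit_ball :: (complex^'n) set) * (1 - (norm z)\<^sup>2) ^ (CARD('n) + 1))))"

definition c_alpha :: "'n itself \<Rightarrow> real \<Rightarrow> real" where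
  "c_alpha _ \<alpha> = Gamma (\<alpha> + real CARD('n) + 1) / (fact CARD('n) * Gamma (\<alpha> + 1))"

text \<open>Hermitian Bergman metric b_jk(p) = (1/(n+1)) d_j dbar_k log (1-|z|^2)^(-(n+1)) at p,
  computed explicitly: b_jk(p) = delta_jk/(1-|p|^2) + conj(p_j) p_k/(1-|p|^2)^2.
  The induced Riemannian metric is g_p(u,v) = Re sum_jk b_jk(p) u_j conj(v_k).\<close>
definition bergman_b :: "complex^'n \<Rightarrow> 'n \<Rightarrow> 'n \<Rightarrow> complex" where
  "bergman_b p j k = (if j = k then 1 / (1 - (norm p)\<^sup>2) else 0)
                     + cnj (p $ j) * p $ k / (1 - (norm p)\<^sup>2)\<^sup>2"

definition bergman_g :: "complex^'n \<Rightarrow> complex^'n \<Rightarrow> complex^'n \<Rightarrow> real" where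
  "bergman_g p u v = Re (\<Sum>j\<in>UNIV. \<Sum>k\<in>UNIV. bergman_b p j k * u $ j * cnj (v $ k))"

definition is_chart :: "(complex^'n) set \<Rightarrow> (real^'m) set \<Rightarrow> (real^'m \<Rightarrow> complex^'n) \<Rightarrow> bool" where
  "is_chart \<Gamma> U \<psi> \<longleftrightarrow>
     open U \<and> smooth_on \<psi> U \<and>
     (\<forall>u\<in>U. inj (frechet_derivative \<psi> (at u))) \<and>
     \<psi> ` U \<subseteq> \<Gamma> \<and> openin (top_of_set \<Gamma>) (\<psi> ` U) \<and>
     (\<exists>g. homeomorphism U (\<psi> ` U) \<psi> g)"

definition embedded_submanifold :: "'m::finite itself \<Rightarrow> (complex^'n) set \<Rightarrow> bool" where
  "embedded_submanifold _ \<Gamma> \<longleftrightarrow> \<Gamma> \<subseteq> unit_ball \<and>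
     (\<forall>p\<in>\<Gamma>. \<exists>U (\<psi> :: real^'m \<Rightarrow> complex^'n). is_chart \<Gamma> U \<psi> \<and> p \<in> \<psi> ` U)"

text \<open>Riemannian volume measure of Gamma for the metric induced by the Bergman metric:
  in every chart, d sigma = sqrt(det Gram(u)) du.  (This determines sigma uniquely.)\<close>
definition riemannian_volume :: "'m::finite itself \<Rightarrow> (complex^'n) set \<Rightarrow> (complex^'n) measure \<Rightarrow> bool" where
  "riemannian_volume _ \<Gamma> \<sigma> \<longleftrightarrow>
     sets \<sigma> = sets borel \<and> emeasure \<sigma> (UNIV - \<Gamma>) = 0 \<and>
     (\<forall>U (\<psi> :: real^'m \<Rightarrow> complex^'n). is_chart \<Gamma> U \<psi> \<longrightarrow>
        (\<forall>A\<in>sets borel. A \<subseteq> \<psi> ` U \<longrightarrow>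
           emeasure \<sigma> A =
             (\<integral>\<^sup>+ u\<in>(U \<inter> \<psi> -` A).
                ennreal (sqrt (det (\<chi> i j. bergman_g (\<psi> u)
                   (frechet_derivative \<psi> (at u) (axis i 1))
                   (frechet_derivative \<psi> (at u) (axis j 1))))) \<partial>lborel)))"

definition smooth_compact_support :: "'m::finite itself \<Rightarrow> (complex^'n) set \<Rightarrow> (complex^'n \<Rightarrow> real) \<Rightarrow> bool" where
  "smooth_compact_support _ \<Gamma> a \<longleftrightarrow>
     (\<forall>U (\<psi> :: real^'m \<Rightarrow> complex^'n). is_chart \<Gamma> U \<psi> \<longrightarrow> smooth_on (a \<circ> \<psi>) U) \<and>
     (\<exists>K. compact K \<and> K \<subseteq> \<Gamma> \<and> (\<forall>w\<in>\<Gamma> - K. a w = 0))"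

end

theory Submission
  imports Defs "HOL-Real_Asymp.Real_Asymp"
begin

lemma key_alg:
  fixes t u s x y :: real
  assumes s2: "s^2 = 1 - t" and t0: "t \<noteq> 0"
  defines "A \<equiv> 1 - complex_of_real (1-s) * (Complex x y / complex_of_real t)"
  defines "B \<equiv> complex_of_real (-s)"
  shows "(1-x)^2 + y^2 - Re (A * cnj A * complex_of_real t + A * cnj B * cnj (Complex x y)
      + B * cnj A * Complex x y + B * cnj B * complex_of_real u) = (1-t)*(1-u)"
proof -
  have e: "A = Complex (1 - (1-s)*x/t) (- (1-s)*y/t)" unfolding A_def using t0
    by (simp add: complex_eq_iff field_simps)
  show ?thesis unfolding e B_def using t0 s2
    apply (simp add: field_simps power2_eq_square)
    apply algebra
    done
qed


lemma norm_sq_vec: "(norm (x::complex^'n))\<^sup>2 = (\<Sum>j\<in>UNIV. (cmod (x$j))\<^sup>2)"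
  unfolding norm_vec_def L2_set_def by (simp add: sum_nonneg)

lemma cinner_self: "cinner z z = complex_of_real ((norm z)\<^sup>2)"
  unfolding cinner_def norm_sq_vec of_real_sum
  by (rule sum.cong[OF refl]) (metis complex_norm_square of_real_power)

lemma cinner_commute: "cinner z w = cnj (cinner w z)"
  unfolding cinner_def by (simp add: mult.commute)

lemma proj_comp: "proj_z z w $ j = (cinner w z / cinner z z) * z $ j"
  by (simp add: proj_z_def)

lemma phi_comp:
  fixes z w :: "complex^'n"
  defines "A \<equiv> 1 - complex_of_real (1 - sqrt (1 - (norm z)\<^sup>2)) * (cinner w z / complex_of_real ((norm z)\<^sup>2))"
  shows "phi_aut z w $ j = (A * z$j + complex_of_real (- sqrt (1 - (norm z)\<^sup>2)) * w$j) / (1 - cinner w z)"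
  unfolding phi_aut_def A_def proj_comp cinner_self by (simp add: algebra_simps)

lemma sum_cmod_sq:
  fixes z w :: "complex^'n"
  shows "(\<Sum>j\<in>UNIV. (cmod (A * z$j + B * w$j))\<^sup>2) =
    Re (A * cnj A * cinner z z + A * cnj B * cinner z w + B * cnj A * cinner w z + B * cnj B * cinner w w)"
proof -
  have "(\<Sum>j\<in>UNIV. (cmod (A * z$j + B * w$j))\<^sup>2) = Re (\<Sum>j\<in>UNIV. (A * z$j + B * w$j) * cnj (A * z$j + B * w$j))"
  proof -
    have h: "(cmod u)^2 = Re (u * cnj u)" for u by (simp only: complex_mult_cnj cmod_power2 Re_complex_of_real)
    show ?thesis by (simp only: h Re_sum)
  qed
  also have "(\<Sum>j\<in>UNIV. (A * z$j + B * w$j) * cnj (A * z$j + B * w$j)) =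
     A * cnj A * cinner z z + A * cnj B * cinner z w + B * cnj A * cinner w z + B * cnj B * cinner w w"
    unfolding cinner_def by (simp add: sum.distrib sum_distrib_left algebra_simps)
  finally show ?thesis .
qed

lemma key_alg0:
  fixes u s :: real assumes "s^2 = 1"
  shows "(1-0)^2 + 0^2 - Re (1 * cnj 1 * complex_of_real 0 + 1 * cnj (complex_of_real (-s)) * cnj 0
      + complex_of_real (-s) * cnj 1 * 0 + complex_of_real (-s) * cnj (complex_of_real (-s)) * complex_of_real u) = (1-0)*(1-u)"
  using assms by (simp add: power2_eq_square)

lemma kernel_id:
  fixes z w :: "complex^'n"
  assumes nz: "norm z < 1" and c1: "cinner w z \<noteq> 1"
  shows "1 - (norm (phi_aut z w))\<^sup>2 = (1 - (norm z)\<^sup>2) * (1 - (norm w)\<^sup>2) / (cmod (1 - cinner z w))\<^sup>2"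
proof -
  define t where "t = (norm z)\<^sup>2"
  define u where "u = (norm w)\<^sup>2"
  define s where "s = sqrt (1 - t)"
  define c where "c = cinner w z"
  define A where "A = 1 - complex_of_real (1 - s) * (c / complex_of_real t)"
  define B where "B = complex_of_real (-s)"
  have t1: "t < 1" "0 \<le> t" unfolding t_def using nz by (simp_all add: power_less_one_iff abs_square_less_1)
  have s2: "s^2 = 1 - t" unfolding s_def using t1 by simp
  have D: "cmod (1 - cinner z w) = cmod (1 - c)"
    unfolding c_def by (metis cinner_commute complex_cnj_diff complex_cnj_one complex_mod_cnj)
  have D0: "cmod (1 - c) \<noteq> 0" using c1 unfolding c_def by simp
  have ph: "phi_aut z w $ j = (A * z$j + B * w$j) / (1 - c)" for j
    unfolding A_def B_def s_def t_def c_def by (rule phi_comp)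
  have "(norm (phi_aut z w))\<^sup>2 = (\<Sum>j\<in>UNIV. (cmod (A * z$j + B * w$j))\<^sup>2) / (cmod (1-c))\<^sup>2"
    unfolding norm_sq_vec ph by (simp add: norm_divide power_divide sum_divide_distrib)
  also have "\<dots> = Re (A * cnj A * complex_of_real t + A * cnj B * cnj c + B * cnj A * c + B * cnj B * complex_of_real u) / (cmod (1-c))\<^sup>2"
    unfolding sum_cmod_sq cinner_self t_def u_def c_def cinner_commute[of z w] ..
  finally have N: "(norm (phi_aut z w))\<^sup>2 = \<dots>" .
  have K: "(cmod (1-c))\<^sup>2 - Re (A * cnj A * complex_of_real t + A * cnj B * cnj c + B * cnj A * c + B * cnj B * complex_of_real u) = (1-t)*(1-u)"
  proof (cases "t = 0")
    case True
    then have "z = 0" unfolding t_def by simp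
    then have "c = 0" unfolding c_def cinner_def by simp
    have "s^2 = 1" using s2 True by simp
    show ?thesis using key_alg0[OF \<open>s^2 = 1\<close>, of u] unfolding A_def B_def \<open>c = 0\<close> True by simp
  next
    case False
    obtain x y where cxy: "c = Complex x y" by (metis complex.exhaust)
    have "(cmod (1-c))\<^sup>2 = (1-x)^2 + y^2" unfolding cxy by (simp add: cmod_power2)
    then show ?thesis using key_alg[OF s2 False, of x y u] unfolding A_def B_def cxy by simp
  qed
  show ?thesis unfolding N D using K D0 unfolding t_def[symmetric] u_def[symmetric]
    by (simp add: field_simps)
qed



lemma cinner_cs: "cmod (cinner z w) \<le> norm z * norm (w::complex^'n)"
proof -
  have "cmod (cinner z w) \<le> (\<Sum>j\<in>UNIV. cmod (z$j) * cmod (w$j))"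
    unfolding cinner_def by (rule order_trans[OF norm_sum]) (simp add: norm_mult)
  also have "\<dots> = (\<Sum>j\<in>UNIV. \<bar>cmod (z$j)\<bar> * \<bar>cmod (w$j)\<bar>)" by simp
  also have "\<dots> \<le> norm z * norm w" unfolding norm_vec_def by (rule L2_set_mult_ineq)
  finally show ?thesis .
qed

definition kern :: "complex^'n \<Rightarrow> complex^'n \<Rightarrow> real" where
  "kern z w = (1 - (norm z)\<^sup>2) * (1 - (norm w)\<^sup>2) / (cmod (1 - cinner z w))\<^sup>2"

lemma denom_lower:
  fixes z w :: "complex^'n"
  assumes "norm z < 1" "norm w \<le> r" "r < 1"
  shows "1 - r \<le> cmod (1 - cinner z w)"
proof -
  have "norm z * norm w \<le> 1 * r" using assms
    by (intro mult_mono) auto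
  then have "norm z * norm w \<le> r" by simp
  then have "cmod (cinner z w) \<le> r" using cinner_cs[of z w] by linarith
  moreover have "1 - cmod (cinner z w) \<le> cmod (1 - cinner z w)"
    by (metis norm_one norm_triangle_ineq2)
  ultimately show ?thesis by linarith
qed

lemma denom_upper:
  fixes z w :: "complex^'n"
  assumes "norm z < 1" "norm w < 1"
  shows "cmod (1 - cinner z w) \<le> 2"
proof -
  have "norm z * norm w \<le> 1" using assms by (simp add: mult_le_one)
  then have "cmod (cinner z w) \<le> 1" using cinner_cs[of z w] by linarith
  then show ?thesis using norm_triangle_ineq4[of 1 "cinner z w"] by simp
qed

lemma kern_pos:
  fixes z w :: "complex^'n"
  assumes "norm z < 1" "norm w < 1"
  shows "0 < kern z w"
proof -
  have "1 - norm w \<le> cmod (1 - cinner z w)" using denom_lower[OF assms(1) order_refl assms(2)] .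
  then have "cmod (1 - cinner z w) > 0" using assms by linarith
  moreover have "(norm z)\<^sup>2 < 1" "(norm w)\<^sup>2 < 1" using assms by (simp_all add: power_less_one_iff abs_square_less_1)
  ultimately show ?thesis unfolding kern_def by (intro divide_pos_pos mult_pos_pos) auto
qed

lemma kern_upper_K:
  fixes z w :: "complex^'n"
  assumes "norm z < 1" "norm w \<le> r" "r < 1"
  shows "kern z w \<le> (1 - (norm z)\<^sup>2) / (1 - r)\<^sup>2"
proof -
  have d: "(1 - r)\<^sup>2 \<le> (cmod (1 - cinner z w))\<^sup>2" using denom_lower[OF assms] assms
    by (intro power_mono) (auto)
  have r0: "0 < 1 - r" using assms by simp
  have "(norm z)\<^sup>2 < 1" using assms by (simp_all add: power_less_one_iff abs_square_less_1)
  then have a: "0 \<le> 1 - (norm z)\<^sup>2" by simp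
  have b: "1 - (norm w)\<^sup>2 \<le> 1" by simp
  have "kern z w \<le> (1 - (norm z)\<^sup>2) * 1 / (cmod (1 - cinner z w))\<^sup>2"
    unfolding kern_def by (intro divide_right_mono mult_left_mono a b) simp
  also have "\<dots> \<le> (1 - (norm z)\<^sup>2) / (1 - r)\<^sup>2"
    using a d r0 by (simp add: frac_le)
  finally show ?thesis .
qed

lemma kern_lower_K:
  fixes z w :: "complex^'n"
  assumes "norm z < 1" "norm w \<le> r" "r < 1"
  shows "(1 - (norm z)\<^sup>2) * (1 - r\<^sup>2) / 4 \<le> kern z w"
proof -
  have nw: "norm w < 1" using assms by linarith
  have c: "0 < cmod (1 - cinner z w)" using denom_lower[OF assms] assms by linarith
  have d: "(cmod (1 - cinner z w))\<^sup>2 \<le> 4" using denom_upper[OF assms(1) nw] c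
  proof -
    have "(cmod (1 - cinner z w))\<^sup>2 \<le> 2\<^sup>2" using denom_upper[OF assms(1) nw] by (intro power_mono) auto
    then show ?thesis by simp
  qed
  have "(norm z)\<^sup>2 < 1" using assms by (simp_all add: power_less_one_iff abs_square_less_1)
  then have a: "0 \<le> 1 - (norm z)\<^sup>2" by simp
  have "(norm w)\<^sup>2 \<le> r\<^sup>2" using assms by (intro power_mono) auto
  then have b: "1 - r\<^sup>2 \<le> 1 - (norm w)\<^sup>2" by simp
  have r0: "0 \<le> r" using assms norm_ge_zero[of w] by linarith
  have "r\<^sup>2 \<le> 1" using r0 assms by (intro power_le_one) auto
  then have b0: "0 \<le> 1 - r\<^sup>2" by simp
  have "(1 - (norm z)\<^sup>2) * (1 - r\<^sup>2) / 4 \<le> (1 - (norm z)\<^sup>2) * (1 - (norm w)\<^sup>2) / 4"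
    using a b by (intro divide_right_mono mult_left_mono) auto
  also have "\<dots> \<le> kern z w" unfolding kern_def
    using a b b0 c d by (intro divide_left_mono mult_nonneg_nonneg) auto
  finally show ?thesis .
qed

lemma cinner_cont: "continuous_on UNIV (\<lambda>w. cinner z (w::complex^'n))"
  unfolding cinner_def by (intro continuous_intros)

lemma kern_meas: "(\<lambda>w. kern z w powr q) \<in> borel_measurable borel"
proof -
  have [measurable]: "(\<lambda>w. cinner z w) \<in> borel_measurable borel"
    by (rule borel_measurable_continuous_onI[OF cinner_cont])
  show ?thesis unfolding kern_def by measurable
qed


lemma tanh_artanh: fixes x::real assumes "\<bar>x\<bar> < 1" shows "tanh (artanh x) = x"
proof -
  define E where "E = exp (artanh x)"
  have E0: "E > 0" by (simp add: E_def)
  have "E * E = exp (2 * artanh x)" by (metis E_def exp_add mult_2)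
  also have "\<dots> = (1+x)/(1-x)"
  proof -
    have p: "(1+x)/(1-x) > 0" using assms by (simp add: abs_less_iff)
    have "2 * artanh x = ln ((1+x)/(1-x))" by (simp add: artanh_def)
    then show ?thesis using p by simp
  qed
  finally have EE: "E*E = (1+x)/(1-x)" .
  have "tanh (artanh x) = (E - inverse E) / (E + inverse E)"
    unfolding tanh_def sinh_def cosh_def E_def exp_minus by (simp add: divide_simps)
  also have "\<dots> = (E*(E*E - 1))/(E*(E*E+1))" using E0 by (simp add: field_simps)
  also have "\<dots> = (E*E - 1)/(E*E+1)" using E0 by (metis mult_divide_mult_cancel_left_if less_irrefl)
  also have "\<dots> = ((1+x)/(1-x) - 1)/((1+x)/(1-x)+1)" by (simp add: EE)
  also have "\<dots> = x" using assms by (simp add: abs_less_iff field_simps)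
  finally show ?thesis .
qed


lemma inner_bound:
  fixes \<sigma> :: "(complex^'n) measure" and \<Gamma> K :: "(complex^'n) set" and a :: "complex^'n \<Rightarrow> real"
  assumes sets: "sets \<sigma> = sets borel" and G: "\<Gamma> \<subseteq> ball 0 1"
    and aK: "\<forall>w\<in>\<Gamma> - K. a w = 0" and a0: "\<forall>w\<in>\<Gamma>. a w \<ge> 0" and z: "norm z < 1"
    and B: "\<forall>w\<in>\<Gamma>\<inter>K. kern z w powr q \<le> B" and B0: "0 \<le> B"
    and L: "\<forall>w\<in>\<Gamma>\<inter>K. L \<le> kern z w powr q" and L0: "0 < L"
  defines "h0 \<equiv> \<lambda>w. indicator \<Gamma> w * a w / (1 - (norm w)\<^sup>2) ^ (CARD('n) + 1)"
  shows "0 \<le> (LINT w:\<Gamma>|\<sigma>. kern z w powr q * a w / (1 - (norm w)\<^sup>2) ^ (CARD('n) + 1))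
     \<and> (LINT w:\<Gamma>|\<sigma>. kern z w powr q * a w / (1 - (norm w)\<^sup>2) ^ (CARD('n) + 1))
        \<le> B * enn2real (\<integral>\<^sup>+ w. ennreal (h0 w) \<partial>\<sigma>)"
proof -
  define f where "f = (\<lambda>w. kern z w powr q * a w / (1 - (norm w)\<^sup>2) ^ (CARD('n) + 1))"
  define g where "g = (\<lambda>w. indicator \<Gamma> w *\<^sub>R f w)"
  define k where "k = (\<lambda>w. kern z w powr q)"
  have I: "(LINT w:\<Gamma>|\<sigma>. kern z w powr q * a w / (1 - (norm w)\<^sup>2) ^ (CARD('n) + 1)) = integral\<^sup>L \<sigma> g"
    unfolding set_lebesgue_integral_def g_def f_def ..
  have wb: "norm w < 1" if "w \<in> \<Gamma>" for w using G that by auto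
  have kpos: "0 < k w" if "w \<in> \<Gamma>" for w unfolding k_def using kern_pos[OF z wb[OF that]] by simp
  have dpos: "0 < (1 - (norm w)\<^sup>2) ^ (CARD('n) + 1)" if "w \<in> \<Gamma>" for w
    using wb[OF that] by (simp add: power_less_one_iff abs_square_less_1)
  have g0: "0 \<le> g w" for w
  proof (cases "w \<in> \<Gamma>")
    case True then show ?thesis unfolding g_def f_def
      using kpos[OF True] dpos[OF True] a0 unfolding k_def by simp
  qed (simp add: g_def)
  have gK: "g w = k w * h0 w" for w
    unfolding g_def f_def k_def h0_def by (cases "w \<in> \<Gamma>") auto
  have h0eq: "h0 w = g w / k w" for w
  proof (cases "w \<in> \<Gamma>")
    case True then show ?thesis using gK[of w] kpos[OF True] by simp
  qed (simp add: g_def h0_def)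
  have h0z: "h0 w = 0" if "w \<notin> \<Gamma> \<inter> K" for w
    using that aK unfolding h0_def by (cases "w \<in> \<Gamma>") auto
  show ?thesis
  proof (cases "integrable \<sigma> g")
    case False
    then have "integral\<^sup>L \<sigma> g = 0" by (rule not_integrable_integral_eq)
    then show ?thesis unfolding I using B0 by simp
  next
    case True
    have gm: "g \<in> borel_measurable \<sigma>" using True by (rule borel_measurable_integrable)
    have km: "k \<in> borel_measurable \<sigma>"
      unfolding k_def using kern_meas measurable_cong_sets[OF sets refl] by blast
    have hm: "h0 \<in> borel_measurable \<sigma>"
    proof -
      have "(\<lambda>w. g w / k w) \<in> borel_measurable \<sigma>" using gm km by (rule borel_measurable_divide)
      then show ?thesis using h0eq by presburger
    qed
    have int0: "0 \<le> integral\<^sup>L \<sigma> g" by (rule integral_nonneg_AE) (simp add: g0)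
    have gnn: "(\<integral>\<^sup>+ w. ennreal (g w) \<partial>\<sigma>) = ennreal (integral\<^sup>L \<sigma> g)"
      by (rule nn_integral_eq_integral[OF True]) (simp add: g0)
    have h0le: "ennreal (h0 w) \<le> ennreal (1/L) * ennreal (g w)" for w
    proof (cases "w \<in> \<Gamma> \<inter> K")
      case True
      then have "L \<le> k w" using L unfolding k_def by auto
      then have "g w / k w \<le> g w / L" using L0 g0[of w] by (intro divide_left_mono) auto
      then show ?thesis using h0eq[of w] L0 g0[of w]
        by (simp add: ennreal_mult'[symmetric] ennreal_leI)
    next
      case False then show ?thesis using h0z by simp
    qed
    have "(\<integral>\<^sup>+ w. ennreal (h0 w) \<partial>\<sigma>) \<le> (\<integral>\<^sup>+ w. ennreal (1/L) * ennreal (g w) \<partial>\<sigma>)"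
      by (rule nn_integral_mono) (rule h0le)
    also have "\<dots> = ennreal (1/L) * ennreal (integral\<^sup>L \<sigma> g)"
      using gm by (simp add: nn_integral_cmult gnn)
    also have "\<dots> < \<infinity>" by (simp add: ennreal_mult_less_top)
    finally have Mfin: "(\<integral>\<^sup>+ w. ennreal (h0 w) \<partial>\<sigma>) < \<infinity>" .
    define Mr where "Mr = enn2real (\<integral>\<^sup>+ w. ennreal (h0 w) \<partial>\<sigma>)"
    have Mr: "(\<integral>\<^sup>+ w. ennreal (h0 w) \<partial>\<sigma>) = ennreal Mr" "0 \<le> Mr"
      using Mfin unfolding Mr_def by (simp_all add: less_top ennreal_enn2real)
    have gle: "ennreal (g w) \<le> ennreal B * ennreal (h0 w)" for w
    proof (cases "w \<in> \<Gamma> \<inter> K")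
      case True
      then have "k w \<le> B" using B unfolding k_def by auto
      moreover have "0 \<le> h0 w" using h0eq[of w] g0[of w] kpos[of w] True by simp
      ultimately have "g w \<le> B * h0 w" unfolding gK by (intro mult_right_mono) auto
      then show ?thesis using B0 by (simp add: ennreal_mult'[symmetric] ennreal_leI)
    next
      case False then show ?thesis using h0z[OF False] gK[of w] by simp
    qed
    have "ennreal (integral\<^sup>L \<sigma> g) \<le> (\<integral>\<^sup>+ w. ennreal B * ennreal (h0 w) \<partial>\<sigma>)"
      unfolding gnn[symmetric] by (rule nn_integral_mono) (rule gle)
    also have "\<dots> = ennreal B * ennreal Mr" using hm by (simp add: nn_integral_cmult Mr)
    also have "\<dots> = ennreal (B * Mr)" using B0 Mr by (simp add: ennreal_mult)
    finally have "integral\<^sup>L \<sigma> g \<le> B * Mr" using B0 Mr by (simp add: ennreal_le_iff)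
    then show ?thesis unfolding I Mr_def[symmetric] using int0 by simp
  qed
qed



lemma kern_le_delta:
  fixes z w :: "complex^'n"
  assumes z: "norm z < 1" and w: "norm w < 1" and e: "0 < \<epsilon>" and h: "\<epsilon> \<le> hyp_dist z w"
  shows "kern z w \<le> 1 - (tanh \<epsilon>)\<^sup>2"
proof -
  have kp: "0 < kern z w" by (rule kern_pos[OF z w])
  have "cinner w z \<noteq> 1"
  proof
    assume "cinner w z = 1"
    then have "cinner z w = 1" by (simp add: cinner_commute[of z w])
    then show False using kp unfolding kern_def by simp
  qed
  then have kid: "kern z w = 1 - (norm (phi_aut z w))\<^sup>2" unfolding kern_def using kernel_id[OF z] by simp
  define y where "y = norm (phi_aut z w)"
  have y0: "0 \<le> y" unfolding y_def by simp
  have "y\<^sup>2 < 1" using kp kid unfolding y_def by simp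
  then have y1: "y < 1" using y0 by (simp add: power_less_one_iff abs_square_less_1)
  have "tanh \<epsilon> \<le> y"
  proof (rule ccontr)
    assume "\<not> tanh \<epsilon> \<le> y"
    then have "tanh (artanh y) < tanh \<epsilon>" using tanh_artanh[of y] y0 y1 by simp
    then have "artanh y < \<epsilon>" by simp
    then show False using h unfolding hyp_dist_def y_def by simp
  qed
  moreover have "0 \<le> tanh \<epsilon>" using e by simp
  ultimately have "(tanh \<epsilon>)\<^sup>2 \<le> y\<^sup>2" by (intro power_mono) auto
  then show ?thesis using kid unfolding y_def by simp
qed

lemma pow_bound:
  fixes k d x q m p M :: real
  assumes "0 \<le> k" "k \<le> d" "k \<le> x" "0 < d" "0 < x" "m \<le> q" "0 \<le> m" "0 < p" "0 \<le> M"
  shows "(k powr q * M) powr p \<le> M powr p * d powr (p*(q-m)) * x powr (p*m)"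
proof -
  define y where "y = min d x"
  have y0: "0 < y" using assms unfolding y_def by simp
  have "k powr q \<le> y powr q" using assms unfolding y_def by (intro powr_mono2) auto
  also have "\<dots> = y powr (q-m) * y powr m" by (simp add: powr_add[symmetric])
  also have "\<dots> \<le> d powr (q-m) * x powr m"
    using assms y0 unfolding y_def by (intro mult_mono powr_mono2) auto
  finally have "k powr q * M \<le> d powr (q-m) * x powr m * M" using assms by (intro mult_right_mono) auto
  then have "(k powr q * M) powr p \<le> (d powr (q-m) * x powr m * M) powr p"
    using assms by (intro powr_mono2) auto
  also have "\<dots> = M powr p * d powr (p*(q-m)) * x powr (p*m)"
    using assms by (simp add: powr_mult powr_powr mult.commute)
  finally show ?thesis .
qed

lemma asy_final:
  fixes d p N A :: real
  assumes "0 < d" "d < 1" "0 < p" "0 < A"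
  shows "\<exists>a0. \<forall>x\<ge>a0. (x + A) powr (A*(1+p)) * d powr (p*x) \<le> x powr (-N)"
proof -
  define l where "l = -(p * ln d)"
  have "ln d < 0" using assms by simp
  then have l0: "0 < l" unfolding l_def using assms by (simp add: mult_pos_neg)
  have e: "d powr (p*x) = exp (-l * x)" for x using assms unfolding l_def by (simp add: powr_def)
  have "((\<lambda>x. (x + A) powr (A*(1+p)) * x powr N * exp (-l*x)) \<longlongrightarrow> 0) at_top"
    using l0 assms by real_asymp
  then have "eventually (\<lambda>x. (x + A) powr (A*(1+p)) * x powr N * exp (-l*x) < 1) at_top"
    by (rule order_tendstoD) simp
  moreover have "eventually (\<lambda>x::real. x > 0) at_top" by (rule eventually_gt_at_top)
  ultimately have "eventually (\<lambda>x. (x + A) powr (A*(1+p)) * d powr (p*x) \<le> x powr (-N)) at_top"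
  proof eventually_elim
    case (elim x)
    have "(x + A) powr (A*(1+p)) * d powr (p*x) = ((x + A) powr (A*(1+p)) * x powr N * exp (-l*x)) * x powr (-N)"
      using elim by (simp add: e powr_minus field_simps)
    also have "\<dots> \<le> 1 * x powr (-N)" using elim by (intro mult_right_mono) auto
    finally show ?case by simp
  qed
  then show ?thesis by (simp add: eventually_at_top_linorder)
qed

lemma c_alpha_bound:
  fixes \<alpha> :: real assumes "0 < \<alpha>"
  shows "0 \<le> c_alpha TYPE('n) \<alpha> \<and> c_alpha TYPE('n) \<alpha> \<le> (\<alpha> + real CARD('n)) ^ CARD('n)"
proof -
  have ni: "\<alpha> + 1 \<notin> \<int>\<^sub>\<le>\<^sub>0" using assms
    by (metis add_pos_pos less_numeral_extra(1) nonpos_Ints_nonpos not_le)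
  have "pochhammer (\<alpha> + 1) CARD('n) = Gamma (\<alpha> + 1 + real CARD('n)) / Gamma (\<alpha> + 1)"
    using pochhammer_Gamma[OF ni] by simp
  then have c: "c_alpha TYPE('n) \<alpha> = pochhammer (\<alpha> + 1) CARD('n) / fact CARD('n)"
    unfolding c_alpha_def by (simp add: add_ac)
  have p0: "0 \<le> pochhammer (\<alpha> + 1) CARD('n)" using assms by (intro pochhammer_nonneg) simp
  have "pochhammer (\<alpha> + 1) CARD('n) = (\<Prod>i<CARD('n). \<alpha> + 1 + real i)"
    by (simp add: pochhammer_prod atLeast0LessThan)
  also have "\<dots> \<le> (\<Prod>i<CARD('n). \<alpha> + real CARD('n))"
    using assms by (intro prod_mono) auto
  also have "\<dots> = (\<alpha> + real CARD('n)) ^ CARD('n)" by simp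
  finally have pb: "pochhammer (\<alpha> + 1) CARD('n) \<le> (\<alpha> + real CARD('n)) ^ CARD('n)" .
  have f1: "1 \<le> (fact CARD('n) :: real)" by simp
  have "pochhammer (\<alpha> + 1) CARD('n) / fact CARD('n) \<le> pochhammer (\<alpha> + 1) CARD('n)"
    using p0 f1 by (simp add: divide_le_eq mult_le_cancel_left1 order_trans)
  then show ?thesis unfolding c using p0 pb by simp
qed



lemma tau_bound:
  fixes F :: "complex^'n \<Rightarrow> ennreal"
  assumes S: "S \<subseteq> unit_ball" and K0: "0 \<le> Kc"
    and F: "\<forall>z\<in>S. F z \<le> ennreal (Kc * (1 - (norm z)\<^sup>2) ^ (CARD('n) + 1))"
  shows "(\<integral>\<^sup>+ z\<in>S. F z \<partial>(tau_measure :: (complex^'n) measure)) \<le> ennreal Kc"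
proof -
  define vol where "vol = measure lborel (unit_ball :: (complex^'n) set)"
  define G where "G = (\<lambda>z::complex^'n. ennreal (Kc * (1 - (norm z)\<^sup>2) ^ (CARD('n) + 1)) * indicator unit_ball z)"
  have ub[measurable]: "(unit_ball :: (complex^'n) set) \<in> sets borel" by (simp add: unit_ball_def)
  have pw: "ennreal (indicator unit_ball z / (vol * (1 - (norm z)\<^sup>2) ^ (CARD('n) + 1))) * G z = ennreal (Kc / vol) * indicator unit_ball z" for z :: "complex^'n"
  proof -
    show "ennreal (indicator unit_ball z / (vol * (1 - (norm z)\<^sup>2) ^ (CARD('n) + 1))) * G z = ennreal (Kc / vol) * indicator unit_ball z"
    proof (cases "z \<in> unit_ball")
      case True
      then have "norm z < 1" unfolding unit_ball_def by simp
      then have d: "0 < (1 - (norm z)\<^sup>2) ^ (CARD('n) + 1)" by (simp add: power_less_one_iff abs_square_less_1)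
      have v0: "0 \<le> vol" unfolding vol_def by simp
      have "ennreal (1 / (vol * (1 - (norm z)\<^sup>2) ^ (CARD('n) + 1))) * ennreal (Kc * (1 - (norm z)\<^sup>2) ^ (CARD('n) + 1))
         = ennreal (1 / (vol * (1 - (norm z)\<^sup>2) ^ (CARD('n) + 1)) * (Kc * (1 - (norm z)\<^sup>2) ^ (CARD('n) + 1)))"
        using d v0 K0 by (intro ennreal_mult''[symmetric]) simp
      also have "1 / (vol * (1 - (norm z)\<^sup>2) ^ (CARD('n) + 1)) * (Kc * (1 - (norm z)\<^sup>2) ^ (CARD('n) + 1)) = Kc / vol"
      proof -
        have gen: "1/(vol*D)*(Kc*D) = Kc/vol" if "0 < D" for D :: real
          using that by (cases "vol = 0") (simp_all add: field_simps)
        show ?thesis by (rule gen[OF d])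
      qed
      finally show ?thesis using True unfolding G_def by simp
    qed (simp add: G_def)
  qed
  have "(\<integral>\<^sup>+ z\<in>S. F z \<partial>tau_measure) \<le> (\<integral>\<^sup>+ z. G z \<partial>(tau_measure :: (complex^'n) measure))"
  proof (rule nn_integral_mono)
    fix z :: "complex^'n"
    show "F z * indicator S z \<le> G z"
    proof (cases "z \<in> S")
      case True then show ?thesis using F S unfolding G_def by auto
    qed simp
  qed
  also have "\<dots> = (\<integral>\<^sup>+ z. ennreal (indicator unit_ball z / (vol * (1 - (norm z)\<^sup>2) ^ (CARD('n) + 1))) * G z \<partial>lborel)"
    unfolding tau_measure_def vol_def G_def by (rule nn_integral_density) measurable
  also have "\<dots> = (\<integral>\<^sup>+ z. ennreal (Kc / vol) * indicator (unit_ball :: (complex^'n) set) z \<partial>lborel)"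
    by (simp only: pw)
  also have "\<dots> = ennreal (Kc / vol) * emeasure lborel (unit_ball :: (complex^'n) set)"
    by (rule nn_integral_cmult_indicator) simp
  also have "emeasure lborel (unit_ball :: (complex^'n) set) = ennreal vol"
    unfolding vol_def unit_ball_def
  proof (rule emeasure_eq_ennreal_measure)
    have "emeasure lborel (ball (0::complex^'n) 1) < \<infinity>"
      by (rule emeasure_bounded_finite) simp
    then show "emeasure lborel (ball (0::complex^'n) 1) \<noteq> top" by simp
  qed
  also have "ennreal (Kc / vol) * ennreal vol = ennreal (Kc / vol * vol)"
  proof -
    have "0 \<le> vol" unfolding vol_def by simp
    then show ?thesis by (rule ennreal_mult''[symmetric])
  qed
  also have "\<dots> \<le> ennreal Kc" using K0 by (intro ennreal_leI) (cases "vol = 0", simp_all)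
  finally show ?thesis .
qed



theorem mainTheorem14:
  fixes \<Gamma> :: "(complex^'n) set" and \<sigma> :: "(complex^'n) measure"
    and a :: "complex^'n \<Rightarrow> real" and p \<epsilon> :: real
  assumes "embedded_submanifold TYPE('m::finite) \<Gamma>"
    and "riemannian_volume TYPE('m) \<Gamma> \<sigma>"
    and "smooth_compact_support TYPE('m) \<Gamma> a"
    and "\<forall>w\<in>\<Gamma>. a w \<ge> 0"
    and "0 < p" "p < 1" "0 < \<epsilon>"
  defines "V \<equiv> {z\<in>unit_ball. \<exists>w\<in>\<Gamma>. hyp_dist z w < \<epsilon>}"
  shows "\<forall>N>0. \<exists>C \<alpha>0. \<forall>\<alpha>\<ge>\<alpha>0.
    ennreal (c_alpha TYPE('n) \<alpha> powr (1 + p)) *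
      (\<integral>\<^sup>+ z\<in>(unit_ball - V).
         ennreal ((LINT w:\<Gamma>|\<sigma>.
            (((1 - (norm z)\<^sup>2) * (1 - (norm w)\<^sup>2) / (cmod (1 - cinner z w))\<^sup>2)
               powr (real CARD('n) + 1 + \<alpha>))
            * a w / (1 - (norm w)\<^sup>2) ^ (CARD('n) + 1)) powr p) \<partial>tau_measure)
    \<le> ennreal (C * \<alpha> powr (- N))"
proof (intro allI impI)
  fix N :: real assume "0 < N"
  have p0: "0 < p" and e0: "0 < \<epsilon>" and a0: "\<forall>w\<in>\<Gamma>. a w \<ge> 0" using assms by auto
  have G: "\<Gamma> \<subseteq> unit_ball" using assms(1) unfolding embedded_submanifold_def by simp
  have sets: "sets \<sigma> = sets borel" using assms(2) unfolding riemannian_volume_def by simp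
  obtain K where K: "compact K" "K \<subseteq> \<Gamma>" "\<forall>w\<in>\<Gamma> - K. a w = 0"
    using assms(3) unfolding smooth_compact_support_def by blast
  obtain r where r: "0 \<le> r" "r < 1" "\<forall>w\<in>K. norm w \<le> r"
  proof (cases "K = {}")
    case True then show ?thesis using that[of 0] by simp
  next
    case False
    have "continuous_on K norm" by (intro continuous_intros)
    then obtain x where x: "x \<in> K" "\<forall>y\<in>K. norm y \<le> norm x"
      using continuous_attains_sup[OF K(1) False] by blast
    have "norm x < 1" using x(1) K(2) G unfolding unit_ball_def by auto
    then show ?thesis using that[of "norm x"] x by simp
  qed
  define nn where "nn = real CARD('n) + 1"
  have nn0: "0 < nn" unfolding nn_def by simp
  define \<delta> where "\<delta> = 1 - (tanh \<epsilon>)\<^sup>2"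
  have th: "0 < tanh \<epsilon>" "tanh \<epsilon> < 1" using e0 by (simp_all add: tanh_real_lt_1)
  have d0: "0 < \<delta>" unfolding \<delta>_def using th by (simp add: power_less_one_iff abs_square_less_1)
  have d1: "\<delta> < 1" unfolding \<delta>_def using th by simp
  define m where "m = nn / p"
  have m0: "0 \<le> m" unfolding m_def using nn0 p0 by simp
  have pm: "p * m = nn" unfolding m_def using p0 by simp
  define h0 where "h0 = (\<lambda>w. indicator \<Gamma> w * a w / (1 - (norm w)\<^sup>2) ^ (CARD('n) + 1))"
  define Mr where "Mr = enn2real (\<integral>\<^sup>+ w. ennreal (h0 w) \<partial>\<sigma>)"
  have Mr0: "0 \<le> Mr" unfolding Mr_def by simp
  have r1: "0 < 1 - r" using r by simp
  define C where "C = Mr powr p * \<delta> powr (p * (nn - m)) / ((1 - r)\<^sup>2) powr nn"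
  have C0: "0 \<le> C" unfolding C_def by simp
  obtain a1 where a1: "\<forall>x\<ge>a1. (x + real CARD('n)) powr (real CARD('n) * (1+p)) * \<delta> powr (p*x) \<le> x powr (-N)"
    using asy_final[OF d0 d1 p0, of "real CARD('n)" N] by auto
  define \<alpha>0 where "\<alpha>0 = max a1 (max 1 (m - nn))"
  show "\<exists>C \<alpha>0. \<forall>\<alpha>\<ge>\<alpha>0.
    ennreal (c_alpha TYPE('n) \<alpha> powr (1 + p)) *
      (\<integral>\<^sup>+ z\<in>(unit_ball - V).
         ennreal ((LINT w:\<Gamma>|\<sigma>.
            (((1 - (norm z)\<^sup>2) * (1 - (norm w)\<^sup>2) / (cmod (1 - cinner z w))\<^sup>2)
               powr (real CARD('n) + 1 + \<alpha>))
            * a w / (1 - (norm w)\<^sup>2) ^ (CARD('n) + 1)) powr p) \<partial>tau_measure)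
    \<le> ennreal (C * \<alpha> powr (- N))"
  proof (intro exI allI impI)
    fix \<alpha> :: real assume "\<alpha>0 \<le> \<alpha>"
    then have al: "a1 \<le> \<alpha>" "1 \<le> \<alpha>" "m - nn \<le> \<alpha>" unfolding \<alpha>0_def by auto
    define q where "q = real CARD('n) + 1 + \<alpha>"
    have qnn: "q = nn + \<alpha>" unfolding q_def nn_def by simp
    have mq: "m \<le> q" using al qnn by simp
    have q0: "0 < q" using al qnn nn0 by simp
    define K\<alpha> where "K\<alpha> = Mr powr p * \<delta> powr (p * (q - m)) / ((1 - r)\<^sup>2) powr nn"
    have K0: "0 \<le> K\<alpha>" unfolding K\<alpha>_def by simp
    have pw: "((LINT w:\<Gamma>|\<sigma>. kern z w powr q * a w / (1 - (norm w)\<^sup>2) ^ (CARD('n) + 1)) powr p)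
       \<le> K\<alpha> * (1 - (norm z)\<^sup>2) ^ (CARD('n) + 1)" if z: "z \<in> unit_ball - V" for z
    proof -
      have zn: "norm z < 1" using z unfolding unit_ball_def by simp
      have hd: "\<forall>w\<in>\<Gamma>. \<epsilon> \<le> hyp_dist z w" using z unfolding V_def by (auto simp: not_less)
      have z2: "0 < 1 - (norm z)\<^sup>2" using zn by (simp add: power_less_one_iff abs_square_less_1)
      define x where "x = (1 - (norm z)\<^sup>2) / (1 - r)\<^sup>2"
      have x0: "0 < x" unfolding x_def using z2 r1 by simp
      define B where "B = (min \<delta> x) powr q"
      define L where "L = ((1 - (norm z)\<^sup>2) * (1 - r\<^sup>2) / 4) powr q"
      have r2: "0 < 1 - r\<^sup>2" using r by (simp add: power_less_one_iff abs_square_less_1)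
      have L0: "0 < L" unfolding L_def using z2 r2 by simp
      have wK: "norm w < 1" "norm w \<le> r" if "w \<in> \<Gamma> \<inter> K" for w
        using that G r unfolding unit_ball_def by auto
      have Bb: "\<forall>w\<in>\<Gamma>\<inter>K. kern z w powr q \<le> B"
      proof
        fix w assume w: "w \<in> \<Gamma> \<inter> K"
        have "kern z w \<le> \<delta>" unfolding \<delta>_def using kern_le_delta[OF zn wK(1)[OF w] e0] hd w by auto
        moreover have "kern z w \<le> x" unfolding x_def using kern_upper_K[OF zn wK(2)[OF w] r(2)] .
        moreover have "0 \<le> kern z w" using kern_pos[OF zn wK(1)[OF w]] by simp
        ultimately show "kern z w powr q \<le> B" unfolding B_def using q0 by (intro powr_mono2) auto
      qed
      have Lb: "\<forall>w\<in>\<Gamma>\<inter>K. L \<le> kern z w powr q"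
      proof
        fix w assume w: "w \<in> \<Gamma> \<inter> K"
        show "L \<le> kern z w powr q" unfolding L_def using kern_lower_K[OF zn wK(2)[OF w] r(2)] z2 r2 q0
          by (intro powr_mono2) auto
      qed
      have B0: "0 \<le> B" unfolding B_def by simp
      have G': "\<Gamma> \<subseteq> ball 0 1" using G unfolding unit_ball_def .
      define I where "I = (LINT w:\<Gamma>|\<sigma>. kern z w powr q * a w / (1 - (norm w)\<^sup>2) ^ (CARD('n) + 1))"
      have ib: "0 \<le> I \<and> I \<le> B * Mr" unfolding I_def Mr_def h0_def
        by (rule inner_bound[OF sets G' K(3) a0 zn Bb B0 Lb L0])
      have "I powr p \<le> (B * Mr) powr p" using ib p0 by (intro powr_mono2) auto
      also have "\<dots> = ((min \<delta> x) powr q * Mr) powr p" unfolding B_def ..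
      also have "\<dots> \<le> Mr powr p * \<delta> powr (p*(q-m)) * x powr (p*m)"
        by (rule pow_bound) (use d0 x0 mq m0 p0 Mr0 in auto)
      also have "x powr (p*m) = (1 - (norm z)\<^sup>2) ^ (CARD('n) + 1) / ((1 - r)\<^sup>2) powr nn"
      proof -
        have "x powr (p*m) = (1 - (norm z)\<^sup>2) powr nn / ((1 - r)\<^sup>2) powr nn"
          unfolding pm x_def using z2 r1 by (simp add: powr_divide)
        also have "(1 - (norm z)\<^sup>2) powr nn = (1 - (norm z)\<^sup>2) ^ (CARD('n) + 1)"
          unfolding nn_def using z2 by (metis of_nat_Suc add.commute Suc_eq_plus1 powr_realpow)
        finally show ?thesis .
      qed
      also have "Mr powr p * \<delta> powr (p*(q-m)) * ((1 - (norm z)\<^sup>2) ^ (CARD('n) + 1) / ((1 - r)\<^sup>2) powr nn)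
          = K\<alpha> * (1 - (norm z)\<^sup>2) ^ (CARD('n) + 1)" unfolding K\<alpha>_def by simp
      finally show ?thesis unfolding I_def .
    qed
    show "ennreal (c_alpha TYPE('n) \<alpha> powr (1 + p)) *
      (\<integral>\<^sup>+ z\<in>(unit_ball - V).
         ennreal ((LINT w:\<Gamma>|\<sigma>.
            (((1 - (norm z)\<^sup>2) * (1 - (norm w)\<^sup>2) / (cmod (1 - cinner z w))\<^sup>2)
               powr (real CARD('n) + 1 + \<alpha>))
            * a w / (1 - (norm w)\<^sup>2) ^ (CARD('n) + 1)) powr p) \<partial>tau_measure)
    \<le> ennreal (C * \<alpha> powr (- N))"
    proof -
      have eqI: "(LINT w:\<Gamma>|\<sigma>.
            (((1 - (norm z)\<^sup>2) * (1 - (norm w)\<^sup>2) / (cmod (1 - cinner z w))\<^sup>2)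
               powr (real CARD('n) + 1 + \<alpha>))
            * a w / (1 - (norm w)\<^sup>2) ^ (CARD('n) + 1)) = 
          (LINT w:\<Gamma>|\<sigma>. kern z w powr q * a w / (1 - (norm w)\<^sup>2) ^ (CARD('n) + 1))" for z
        unfolding kern_def q_def ..
      have T: "(\<integral>\<^sup>+ z\<in>(unit_ball - V). ennreal ((LINT w:\<Gamma>|\<sigma>. kern z w powr q * a w / (1 - (norm w)\<^sup>2) ^ (CARD('n) + 1)) powr p) \<partial>tau_measure)
          \<le> ennreal K\<alpha>"
        by (rule tau_bound) (use K0 pw in \<open>auto intro!: ennreal_leI\<close>)
      have al0: "0 < \<alpha>" using al by simp
      have cb: "0 \<le> c_alpha TYPE('n) \<alpha>" "c_alpha TYPE('n) \<alpha> \<le> (\<alpha> + real CARD('n)) ^ CARD('n)"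
        using c_alpha_bound[OF al0] by auto
      have an: "0 < \<alpha> + real CARD('n)" using al0 by simp
      have "c_alpha TYPE('n) \<alpha> powr (1 + p) \<le> ((\<alpha> + real CARD('n)) ^ CARD('n)) powr (1 + p)"
        using cb p0 by (intro powr_mono2) auto
      also have "\<dots> = (\<alpha> + real CARD('n)) powr (real CARD('n) * (1 + p))"
        using an by (simp add: powr_realpow[symmetric] powr_powr)
      finally have cp: "c_alpha TYPE('n) \<alpha> powr (1 + p) \<le> (\<alpha> + real CARD('n)) powr (real CARD('n) * (1 + p))" .
      have KC: "K\<alpha> = C * \<delta> powr (p * \<alpha>)"
      proof -
        have "\<delta> powr (p * (q - m)) = \<delta> powr (p * (nn - m)) * \<delta> powr (p * \<alpha>)"
          unfolding qnn by (simp add: powr_add[symmetric] algebra_simps)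
        then show ?thesis unfolding K\<alpha>_def C_def by simp
      qed
      have "c_alpha TYPE('n) \<alpha> powr (1 + p) * K\<alpha> \<le> (\<alpha> + real CARD('n)) powr (real CARD('n) * (1 + p)) * \<delta> powr (p * \<alpha>) * C"
      proof -
        have "0 \<le> \<delta> powr (p * \<alpha>) * C" using C0 by simp
        from mult_right_mono[OF cp this] show ?thesis unfolding KC by (simp add: ac_simps)
      qed
      also have "\<dots> \<le> \<alpha> powr (-N) * C" using a1 al C0 by (intro mult_right_mono) auto
      finally have R: "c_alpha TYPE('n) \<alpha> powr (1 + p) * K\<alpha> \<le> C * \<alpha> powr (-N)" by (simp add: mult.commute)
      have "ennreal (c_alpha TYPE('n) \<alpha> powr (1 + p)) *
        (\<integral>\<^sup>+ z\<in>(unit_ball - V). ennreal ((LINT w:\<Gamma>|\<sigma>. kern z w powr q * a w / (1 - (norm w)\<^sup>2) ^ (CARD('n) + 1)) powr p) \<partial>tau_measure)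
        \<le> ennreal (c_alpha TYPE('n) \<alpha> powr (1 + p)) * ennreal K\<alpha>"
        using T by (rule mult_left_mono) simp
      also have "\<dots> = ennreal (c_alpha TYPE('n) \<alpha> powr (1 + p) * K\<alpha>)" using K0 by (simp add: ennreal_mult)
      also have "\<dots> \<le> ennreal (C * \<alpha> powr (- N))" using R by (rule ennreal_leI)
      finally show ?thesis unfolding eqI .
    qed
  qed
qed

end
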